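(* If $A$ and $B$ are pure hyperbolic isometries of $\mathbb{H}^4$ with ultra-parallel axes, then there is a plane $P$ orthogonal to both axes of $A$ and $B$. Hence $A$ and $B$ are linked.
   Context: A pure hyperbolic isometry is a composition of reflections in two ultra-parallel hyperplanes; its invariant geodesic is its axis. A plane is a $2$-dimensional totally geodesic subspace. Two isometries $A,B$ are linked if there are involutions $\alpha,\beta,\gamma$ of $\mathbb{H}^4$ with $A=\alpha\beta$ and $B=\beta\gamma$. *)

theory Defs
  imports "HOL-Analysis.Analysis"
begin

text \<open>Hyperboloid model of hyperbolic 4-space inside R^5 = real^5,
  coordinate 1 being the time-like one.\<close>

type_synonym pt = "real ^ 5"

definition lor :: "pt \<Rightarrow> pt \<Rightarrow> real" where
  "lor x y = (\<Sum>i\<in>UNIV. x $ i * y $ i) - 2 * (x $ 1 * y $ 1)"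

definition H4 :: "pt set" where
  "H4 = {x. lor x x = -1 \<and> x $ 1 > 0}"

definition hdist :: "pt \<Rightarrow> pt \<Rightarrow> real" where
  "hdist x y = arcosh (- lor x y)"

definition isometry :: "(pt \<Rightarrow> pt) \<Rightarrow> bool" where
  "isometry f \<longleftrightarrow> f ` H4 = H4 \<and> (\<forall>x\<in>H4. \<forall>y\<in>H4. hdist (f x) (f y) = hdist x y)"

definition involution :: "(pt \<Rightarrow> pt) \<Rightarrow> bool" where
  "involution f \<longleftrightarrow> isometry f \<and> (\<forall>x\<in>H4. f (f x) = x) \<and> (\<exists>x\<in>H4. f x \<noteq> x)"

definition tg_subspace :: "nat \<Rightarrow> pt set \<Rightarrow> bool" where
  "tg_subspace k S \<longleftrightarrow> (\<exists>V. subspace V \<and> dim V = k + 1 \<and> S = H4 \<inter> V \<and> S \<noteq> {})"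

definition geodesic :: "pt set \<Rightarrow> bool" where
  "geodesic S \<longleftrightarrow> tg_subspace 1 S"

definition plane :: "pt set \<Rightarrow> bool" where
  "plane S \<longleftrightarrow> tg_subspace 2 S"

definition hyperplane :: "pt \<Rightarrow> pt set" where
  "hyperplane u = {x\<in>H4. lor x u = 0}"

definition refl :: "pt \<Rightarrow> pt \<Rightarrow> pt" where
  "refl u x = x - (2 * lor x u / lor u u) *\<^sub>R u"

text \<open>Ultra-parallel: at positive hyperbolic distance (disjoint, not asymptotic).\<close>
definition ultra_parallel :: "pt set \<Rightarrow> pt set \<Rightarrow> bool" where
  "ultra_parallel S T \<longleftrightarrow> (\<exists>e>0. \<forall>x\<in>S. \<forall>y\<in>T. hdist x y \<ge> e)"

definition pure_hyperbolic :: "(pt \<Rightarrow> pt) \<Rightarrow> bool" where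
  "pure_hyperbolic A \<longleftrightarrow> (\<exists>u v. lor u u > 0 \<and> lor v v > 0 \<and>
      ultra_parallel (hyperplane u) (hyperplane v) \<and>
      (\<forall>x\<in>H4. A x = refl u (refl v x)))"

definition axis_of :: "(pt \<Rightarrow> pt) \<Rightarrow> pt set \<Rightarrow> bool" where
  "axis_of A L \<longleftrightarrow> geodesic L \<and> A ` L = L"

text \<open>S meets L orthogonally: at some common point p the tangent vectors
  (vectors of the spans Lorentz-orthogonal to p) are Lorentz-orthogonal.\<close>
definition orthogonal_to :: "pt set \<Rightarrow> pt set \<Rightarrow> bool" where
  "orthogonal_to S L \<longleftrightarrow> (\<exists>p\<in>S \<inter> L. \<forall>v\<in>span L. \<forall>w\<in>span S.
      lor v p = 0 \<longrightarrow> lor w p = 0 \<longrightarrow> lor v w = 0)"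

definition linked :: "(pt \<Rightarrow> pt) \<Rightarrow> (pt \<Rightarrow> pt) \<Rightarrow> bool" where
  "linked A B \<longleftrightarrow> (\<exists>\<alpha> \<beta> \<gamma>. involution \<alpha> \<and> involution \<beta> \<and> involution \<gamma> \<and>
      (\<forall>x\<in>H4. A x = \<alpha> (\<beta> x)) \<and> (\<forall>x\<in>H4. B x = \<beta> (\<gamma> x)))"

end

theory Submission
  imports Defs
begin


lemma lor_inner: "lor x y = inner x y - 2 * (x $ 1 * y $ 1)"
  by (simp add: lor_def inner_vec_def)

lemma lor_sym: "lor x y = lor y x"
  by (simp add: lor_inner inner_commute mult.commute)

lemma lor_add_left: "lor (x + y) z = lor x z + lor y z"
  by (simp add: lor_inner inner_add_left algebra_simps)
lemma lor_add_right: "lor z (x + y) = lor z x + lor z y"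
  by (simp add: lor_inner inner_add_right algebra_simps)
lemma lor_diff_left: "lor (x - y) z = lor x z - lor y z"
  by (simp add: lor_inner inner_diff_left algebra_simps)
lemma lor_diff_right: "lor z (x - y) = lor z x - lor z y"
  by (simp add: lor_inner inner_diff_right algebra_simps)
lemma lor_scale_left: "lor (c *\<^sub>R x) z = c * lor x z"
  by (simp add: lor_inner algebra_simps)
lemma lor_scale_right: "lor z (c *\<^sub>R x) = c * lor z x"
  by (simp add: lor_inner algebra_simps)
lemma lor_minus_left: "lor (- x) z = - lor x z"
  by (simp add: lor_inner algebra_simps)
lemma lor_minus_right: "lor z (- x) = - lor z x"
  by (simp add: lor_inner algebra_simps)
lemma lor_zero_left[simp]: "lor 0 z = 0" by (simp add: lor_inner)
lemma lor_zero_right[simp]: "lor z 0 = 0" by (simp add: lor_inner)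

lemmas lor_simps = lor_add_left lor_add_right lor_diff_left lor_diff_right
  lor_scale_left lor_scale_right lor_minus_left lor_minus_right

definition sp :: "pt \<Rightarrow> pt" where "sp x = x - (x $ 1) *\<^sub>R axis 1 1"

lemma sp_decomp: "x = sp x + (x $ 1) *\<^sub>R axis 1 1" by (simp add: sp_def)

lemma sp_1[simp]: "sp x $ 1 = 0" by (simp add: sp_def axis_def)

lemma inner_sp: "inner x y = inner (sp x) (sp y) + x $ 1 * y $ 1"
proof -
  have "inner x y = inner (sp x + (x $ 1) *\<^sub>R axis 1 1) (sp y + (y $ 1) *\<^sub>R axis 1 1)"
    using sp_decomp[of x] sp_decomp[of y] by simp
  also have "\<dots> = inner (sp x) (sp y) + x $ 1 * y $ 1"
    by (simp add: inner_add_left inner_add_right inner_axis inner_axis' inner_axis_axis)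
  finally show ?thesis .
qed

lemma lor_sp: "lor x y = inner (sp x) (sp y) - x $ 1 * y $ 1"
  unfolding lor_inner by (subst inner_sp) simp

lemma lor_self_sp: "lor x x = (norm (sp x))^2 - (x $ 1)^2"
  by (simp add: lor_sp power2_norm_eq_inner[symmetric] power2_eq_square)

lemma lor_cs: "\<bar>inner (sp x) (sp y)\<bar> \<le> norm (sp x) * norm (sp y)"
  by (rule Cauchy_Schwarz_ineq2)

lemma causal_bound: "lor x x \<le> 0 \<Longrightarrow> norm (sp x) \<le> \<bar>x $ 1\<bar>"
proof -
  assume "lor x x \<le> 0"
  hence "(norm (sp x))^2 \<le> (\<bar>x $ 1\<bar>)^2" using lor_self_sp[of x] by simp
  thus ?thesis by (rule power2_le_imp_le) simp
qed

lemma timelike_bound: "lor x x < 0 \<Longrightarrow> norm (sp x) < \<bar>x $ 1\<bar>"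
proof -
  assume "lor x x < 0"
  hence "(norm (sp x))^2 < (\<bar>x $ 1\<bar>)^2" using lor_self_sp[of x] by simp
  thus ?thesis by (rule power_less_imp_less_base) simp
qed

lemma future_lemma:
  assumes "lor x x \<le> 0" "lor y y \<le> 0" "x $ 1 > 0" "lor x y < 0"
  shows "y $ 1 > 0"
proof (rule ccontr)
  assume "\<not> y $ 1 > 0"
  hence y0: "y $ 1 \<le> 0" by simp
  have a: "norm (sp x) \<le> x $ 1" using causal_bound[OF assms(1)] assms(3) by simp
  have b: "norm (sp y) \<le> - y $ 1" using causal_bound[OF assms(2)] y0 by simp
  have "norm (sp x) * norm (sp y) \<le> x $ 1 * (- y $ 1)"
    using mult_mono[OF a b] assms(3) by simp
  moreover have "- inner (sp x) (sp y) \<le> norm (sp x) * norm (sp y)"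
    using lor_cs[of x y] by linarith
  ultimately have "lor x y \<ge> 0" using lor_sp[of x y] by simp
  thus False using assms(4) by simp
qed

lemma causal_future_lor_le:
  assumes "lor x x \<le> 0" "lor y y \<le> 0" "x $ 1 > 0" "y $ 1 > 0"
  shows "lor x y \<le> 0"
proof -
  have a: "norm (sp x) \<le> x $ 1" using causal_bound[OF assms(1)] assms(3) by simp
  have b: "norm (sp y) \<le> y $ 1" using causal_bound[OF assms(2)] assms(4) by simp
  have "norm (sp x) * norm (sp y) \<le> x $ 1 * y $ 1"
    using mult_mono[OF a b] assms(3) by simp
  thus ?thesis using lor_cs[of x y] lor_sp[of x y] by linarith
qed

lemma H4_lor_le:
  assumes "x \<in> H4" "y \<in> H4"
  shows "lor x y \<le> -1"
proof -
  let ?a = "norm (sp x)" and ?b = "norm (sp y)"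
  have x1: "(x$1)^2 = 1 + ?a^2" "x $ 1 > 0" using assms(1) lor_self_sp[of x] by (auto simp: H4_def)
  have y1: "(y$1)^2 = 1 + ?b^2" "y $ 1 > 0" using assms(2) lor_self_sp[of y] by (auto simp: H4_def)
  have e1: "(x$1 * y$1)^2 = (1 + ?a^2) * (1 + ?b^2)" using x1 y1 by (simp add: power_mult_distrib)
  have e2: "(1 + ?a^2) * (1 + ?b^2) - (1 + ?a * ?b)^2 = (?a - ?b)^2"
    by (simp add: power2_eq_square algebra_simps)
  have "(1 + ?a * ?b)^2 \<le> (x$1 * y$1)^2" using e1 e2 zero_le_power2[of "?a - ?b"] by linarith
  hence "1 + ?a * ?b \<le> x$1 * y$1"
    by (rule power2_le_imp_le) (use x1 y1 in simp)
  thus ?thesis using lor_cs[of x y] lor_sp[of x y] by linarith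
qed



lemma refl_lor:
  assumes "lor u u \<noteq> 0"
  shows "lor (refl u x) (refl u y) = lor x y"
proof -
  define a where "a = 2 * lor x u / lor u u"
  define b where "b = 2 * lor y u / lor u u"
  have "lor (refl u x) (refl u y) = lor x y - b * lor x u - a * lor u y + a * b * lor u u"
    unfolding refl_def a_def[symmetric] b_def[symmetric] by (simp add: lor_simps algebra_simps)
  also have "a * b * lor u u = 2 * b * lor x u" unfolding a_def using assms by simp
  also have "a * lor u y = b * lor x u" unfolding a_def b_def using assms by (simp add: lor_sym[of u y])
  finally show ?thesis by simp
qed

lemma refl_refl:
  assumes "lor u u \<noteq> 0"
  shows "refl u (refl u x) = x"
proof -
  have "lor (refl u x) u = - lor x u"
    using assms by (simp add: refl_def lor_simps)
  thus ?thesis using assms by (simp add: refl_def[of u "refl u x"]) (simp add: refl_def algebra_simps)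
qed

lemma refl_fix: "lor x u = 0 \<Longrightarrow> refl u x = x"
  by (simp add: refl_def)

lemma refl_self: "lor u u \<noteq> 0 \<Longrightarrow> refl u u = - u"
  by (simp add: refl_def scaleR_2)

lemma lor_refl_u: "lor u u \<noteq> 0 \<Longrightarrow> lor (refl u x) u = - lor x u"
  by (simp add: refl_def lor_simps)

lemma linear_refl: "linear (refl u)"
  unfolding refl_def
  by (rule linearI) (simp_all add: lor_simps algebra_simps add_divide_distrib scaleR_add_left[symmetric]
      del: scaleR_add_left)

lemma refl_add: "refl u (x + y) = refl u x + refl u y"
  using linear_refl[of u] by (simp add: linear_add)
lemma refl_scale: "refl u (c *\<^sub>R x) = c *\<^sub>R refl u x"
  using linear_refl[of u] by (simp add: linear_scale)
lemma refl_diff: "refl u (x - y) = refl u x - refl u y"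
  using linear_refl[of u] by (simp add: linear_diff)
lemma refl_minus: "refl u (- x) = - refl u x"
  using linear_refl[of u] by (simp add: linear_neg)

lemma refl_commute:
  assumes "lor u m = 0"
  shows "refl u (refl m x) = refl m (refl u x)"
  using assms by (simp add: refl_def lor_simps lor_sym[of m u] algebra_simps)

lemma normalize_H4:
  assumes "lor z z < 0" "z $ 1 > 0"
  shows "(1 / sqrt (- lor z z)) *\<^sub>R z \<in> H4"
proof -
  have s: "sqrt (- lor z z) > 0" using assms by simp
  have "lor ((1 / sqrt (- lor z z)) *\<^sub>R z) ((1 / sqrt (- lor z z)) *\<^sub>R z) = lor z z / (sqrt (- lor z z))^2"
    by (simp add: lor_simps power2_eq_square)
  also have "\<dots> = -1" using assms by simp
  finally show ?thesis using s assms by (simp add: H4_def)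
qed

lemma H4_lor_self: "x \<in> H4 \<Longrightarrow> lor x x = -1" by (simp add: H4_def)
lemma H4_pos: "x \<in> H4 \<Longrightarrow> x $ 1 > 0" by (simp add: H4_def)

lemma H4_future:
  assumes "x \<in> H4" "lor z z \<le> 0" "lor x z < 0"
  shows "z $ 1 > 0"
  using future_lemma[of x z] assms by (simp add: H4_def)

lemma refl_H4:
  assumes "lor u u > 0" "x \<in> H4"
  shows "refl u x \<in> H4"
proof -
  have a: "lor (refl u x) (refl u x) = -1" using refl_lor[of u x x] assms by (simp add: H4_def)
  have "lor x (refl u x) = -1 - 2 * (lor x u)^2 / lor u u"
    using assms by (simp add: refl_def lor_simps H4_def power2_eq_square)
  also have "\<dots> < 0" using assms by (smt (verit) divide_nonneg_pos zero_le_power2)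
  finally have "(refl u x) $ 1 > 0" using H4_future[OF assms(2)] a by simp
  thus ?thesis using a by (simp add: H4_def)
qed

lemma hdist_iso:
  assumes "\<And>x y. lor (f x) (f y) = lor x y"
  shows "hdist (f x) (f y) = hdist x y"
  using assms by (simp add: hdist_def)

lemma isometryI:
  assumes "\<And>x y. lor (f x) (f y) = lor x y" "\<And>x. x \<in> H4 \<Longrightarrow> f x \<in> H4"
    "\<And>x. x \<in> H4 \<Longrightarrow> \<exists>y\<in>H4. x = f y"
  shows "isometry f"
  unfolding isometry_def using assms hdist_iso[of f] by (auto simp: image_def)

lemma isometry_refl:
  assumes "lor u u > 0"
  shows "isometry (refl u)"
proof (rule isometryI)
  show "lor (refl u x) (refl u y) = lor x y" for x y using refl_lor assms by simp
  show "refl u x \<in> H4" if "x \<in> H4" for x using refl_H4 assms that by simp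
  show "\<exists>y\<in>H4. x = refl u y" if "x \<in> H4" for x
    using refl_H4[OF assms that] refl_refl[of u x] assms by (intro bexI[of _ "refl u x"]) auto
qed

lemma isometry_comp:
  assumes "isometry f" "isometry g"
  shows "isometry (\<lambda>x. f (g x))"
proof -
  have "(\<lambda>x. f (g x)) ` H4 = H4" using assms unfolding isometry_def by (simp add: image_image[symmetric])
  moreover have "\<forall>x\<in>H4. \<forall>y\<in>H4. hdist (f (g x)) (f (g y)) = hdist x y"
    using assms unfolding isometry_def by (metis image_eqI)
  ultimately show ?thesis by (simp add: isometry_def)
qed

lemma cosh_gt1: "(e::real) > 0 \<Longrightarrow> cosh e > 1"
  using cosh_real_nonneg_less_iff[of 0 e] by simp

lemma hdist_ge:
  assumes "x \<in> H4" "y \<in> H4" "hdist x y \<ge> e" "e > 0"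
  shows "- lor x y \<ge> cosh e"
proof (rule ccontr)
  assume "\<not> ?thesis"
  hence l: "- lor x y < cosh e" by simp
  have g: "- lor x y \<ge> 1" using H4_lor_le[OF assms(1,2)] by simp
  have "arcosh (- lor x y) < arcosh (cosh e)"
    using l g cosh_real_ge_1[of e] by simp
  hence "hdist x y < e" using assms(4) by (simp add: hdist_def arcosh_cosh_real)
  thus False using assms(3) by simp
qed

lemma proj_H4:
  assumes "x \<in> H4" "lor v v > 0"
  defines "m \<equiv> sqrt (1 + (lor x v)^2 / lor v v)"
  defines "y \<equiv> (1 / m) *\<^sub>R (x - (lor x v / lor v v) *\<^sub>R v)"
  shows "y \<in> H4" "lor y v = 0" "lor x y = - m" "m \<ge> 1"
proof -
  let ?z = "x - (lor x v / lor v v) *\<^sub>R v"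
  have q: "(lor x v)^2 / lor v v \<ge> 0" using assms(2) by simp
  have m1: "m \<ge> 1" unfolding m_def using q by simp
  have zz: "lor ?z ?z = - (m^2)"
    unfolding m_def using assms q by (simp add: lor_simps lor_sym[of v x] H4_def field_simps power2_eq_square)
  have xz: "lor x ?z = - (m^2)"
    unfolding m_def using assms q by (simp add: lor_simps lor_sym[of v x] H4_def field_simps power2_eq_square)
  have z1: "?z $ 1 > 0" using H4_future[OF assms(1), of ?z] zz xz m1 by simp
  have "sqrt (- lor ?z ?z) = m" using zz m1 by simp
  hence yd: "y = (1 / sqrt (- lor ?z ?z)) *\<^sub>R ?z" unfolding y_def by simp
  show "y \<in> H4" unfolding yd by (rule normalize_H4) (use zz m1 z1 in auto)
  show "lor y v = 0" unfolding y_def using assms(2) by (simp add: lor_simps)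
  show "lor x y = - m" unfolding y_def using xz m1 by (simp add: lor_simps power2_eq_square)
  show "m \<ge> 1" by (rule m1)
qed



lemma span2_decomp: "x \<in> span {a, b} \<Longrightarrow> \<exists>\<alpha> \<beta>. x = \<alpha> *\<^sub>R a + \<beta> *\<^sub>R b"
  by (auto simp: span_insert span_singleton) (metis add.commute diff_add_cancel)

lemma span3_decomp: "x \<in> span {a, b, c} \<Longrightarrow> \<exists>\<alpha> \<beta> \<gamma>. x = \<alpha> *\<^sub>R a + \<beta> *\<^sub>R b + \<gamma> *\<^sub>R c"
  by (auto simp: span_insert span_singleton) (metis add.commute add.assoc diff_add_cancel)

lemma span2_mem: "\<alpha> *\<^sub>R a + \<beta> *\<^sub>R b \<in> span {a, b}"
  by (intro span_add span_scale span_base) auto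

lemma subspace_lor_zero: "subspace {w. lor a w = 0}"
  by (auto simp: subspace_def lor_simps)

lemma lor_span_zero:
  assumes "\<And>s. s \<in> S \<Longrightarrow> lor a s = 0" "w \<in> span S"
  shows "lor a w = 0"
proof -
  have "w \<in> {w. lor a w = 0}"
    by (rule span_induct[OF assms(2)]) (use subspace_lor_zero assms(1) in auto)
  thus ?thesis by simp
qed

lemma timelike_perp:
  assumes "lor x x < 0" "lor x y = 0" "y \<noteq> 0"
  shows "lor y y > 0"
proof -
  have tb: "norm (sp x) < \<bar>x $ 1\<bar>" using timelike_bound[OF assms(1)] .
  have e: "inner (sp x) (sp y) = x $ 1 * y $ 1" using assms(2) lor_sp[of x y] by simp
  have spy: "sp y \<noteq> 0"
  proof
    assume "sp y = 0"
    hence "x $ 1 * y $ 1 = 0" using e by simp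
    moreover have "x $ 1 \<noteq> 0" using tb by auto
    ultimately have "y $ 1 = 0" by simp
    hence "y = 0" using sp_decomp[of y] \<open>sp y = 0\<close> by simp
    thus False using assms(3) by simp
  qed
  hence np: "norm (sp y) > 0" by simp
  have "\<bar>x $ 1\<bar> * \<bar>y $ 1\<bar> \<le> norm (sp x) * norm (sp y)"
    using lor_cs[of x y] e by (simp add: abs_mult)
  also have "\<dots> < \<bar>x $ 1\<bar> * norm (sp y)" using tb np by simp
  finally have "\<bar>y $ 1\<bar> < norm (sp y)" by (simp add: mult_less_cancel_left)
  hence "\<bar>y $ 1\<bar>^2 < (norm (sp y))^2"
    by (intro power_strict_mono) auto
  hence "(y $ 1)^2 < (norm (sp y))^2" by simp
  thus ?thesis using lor_self_sp[of y] by simp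
qed

lemma timelike_perp_ge:
  assumes "lor x x < 0" "lor x y = 0"
  shows "lor y y \<ge> 0"
  using timelike_perp[OF assms] by (cases "y = 0") auto

lemma null_norm: "lor a a = 0 \<Longrightarrow> a $ 1 > 0 \<Longrightarrow> norm (sp a) = a $ 1"
proof -
  assume "lor a a = 0" "a $ 1 > 0"
  hence "(norm (sp a))^2 = (a $ 1)^2" using lor_self_sp[of a] by simp
  thus ?thesis using \<open>a $ 1 > 0\<close> by (simp add: power2_eq_iff_nonneg)
qed

lemma null_parallel:
  assumes "lor a a = 0" "lor b b = 0" "a $ 1 > 0" "b $ 1 > 0" "lor a b = 0"
  shows "b = (b $ 1 / a $ 1) *\<^sub>R a"
proof -
  have na: "norm (sp a) = a $ 1" and nb: "norm (sp b) = b $ 1" using null_norm assms by auto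
  have "inner (sp a) (sp b) = norm (sp a) * norm (sp b)" using lor_sp[of a b] assms na nb by simp
  hence "norm (sp a) *\<^sub>R sp b = norm (sp b) *\<^sub>R sp a" by (simp add: norm_cauchy_schwarz_eq)
  hence c: "sp b = (b $ 1 / a $ 1) *\<^sub>R sp a" using na nb assms(3)
    by (metis (no_types, lifting) divide_inverse_commute less_irrefl scaleR_scaleR inverse_eq_divide
        scaleR_one right_inverse mult.commute)
  have "b = sp b + (b $ 1) *\<^sub>R axis 1 1" by (rule sp_decomp)
  also have "\<dots> = (b $ 1 / a $ 1) *\<^sub>R (sp a + (a $ 1) *\<^sub>R axis 1 1)"
    using c assms(3) by (simp add: scaleR_add_right)
  also have "\<dots> = (b $ 1 / a $ 1) *\<^sub>R a" using sp_decomp[of a] by simp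
  finally show ?thesis .
qed

definition J :: "pt \<Rightarrow> pt" where "J y = y - (2 * y $ 1) *\<^sub>R axis 1 1"

lemma lor_J: "lor x y = inner x (J y)"
  by (simp add: J_def lor_inner inner_diff_right inner_axis algebra_simps)

lemma perp_exists4:
  "\<exists>n. n \<noteq> 0 \<and> lor n a = 0 \<and> lor n b = 0 \<and> lor n c = 0 \<and> lor n d = 0"
proof -
  let ?S = "{J a, J b, J c, J d}"
  have "dim ?S \<le> card ?S" by (rule dim_le_card) (auto intro: span_base)
  also have "\<dots> \<le> 4" using card_length[of "[J a, J b, J c, J d]"] by simp
  finally have "dim ?S < DIM(pt)" by simp
  then obtain x where x: "x \<noteq> 0" "\<And>y. y \<in> span ?S \<Longrightarrow> orthogonal x y"
    using orthogonal_to_subspace_exists by blast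
  have "orthogonal x (J a)" "orthogonal x (J b)" "orthogonal x (J c)" "orthogonal x (J d)"
    using x(2) by (auto intro: span_base)
  thus ?thesis using x(1) by (intro exI[of _ x]) (simp add: lor_J orthogonal_def)
qed

lemma span_H4:
  assumes "subspace V" "x \<in> H4" "x \<in> V"
  shows "span (H4 \<inter> V) = V"
proof
  show "span (H4 \<inter> V) \<subseteq> V" using assms(1) by (simp add: span_minimal)
  show "V \<subseteq> span (H4 \<inter> V)"
  proof
    fix v assume v: "v \<in> V"
    define K where "K = 2 * \<bar>lor x v\<bar> + \<bar>lor v v\<bar> + 2"
    have K: "K \<ge> 2" unfolding K_def by simp
    define s where "s = 1 / K"
    have s0: "s > 0" "s \<le> 1/2" using K unfolding s_def by auto
    define z where "z = x + s *\<^sub>R v"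
    have zz: "lor z z = -1 + 2 * s * lor x v + s^2 * lor v v"
      unfolding z_def using assms(2) by (simp add: lor_simps lor_sym[of v x] H4_def power2_eq_square algebra_simps)
    have sK: "s * K = 1" unfolding s_def using K by simp
    have b1: "2 * s * lor x v \<le> s * (2 * \<bar>lor x v\<bar>)" using s0 by (simp add: mult_left_mono)
    have b2: "s^2 * lor v v \<le> s * \<bar>lor v v\<bar>"
    proof -
      have "s^2 * lor v v \<le> s^2 * \<bar>lor v v\<bar>" by (simp add: mult_left_mono)
      also have "\<dots> \<le> s * \<bar>lor v v\<bar>" using s0 by (simp add: power2_eq_square mult_right_mono)
      finally show ?thesis .
    qed
    have "s * (2 * \<bar>lor x v\<bar>) + s * \<bar>lor v v\<bar> < s * K" using s0 unfolding K_def by (simp add: algebra_simps)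
    hence zneg: "lor z z < 0" using zz b1 b2 sK by linarith
    have xz: "lor x z = -1 + s * lor x v" unfolding z_def using assms(2) by (simp add: lor_simps H4_def)
    have "s * lor x v \<le> s * \<bar>lor x v\<bar>" using s0 by (simp add: mult_left_mono)
    moreover have "s * \<bar>lor x v\<bar> < s * K" using s0 by (intro mult_strict_left_mono) (auto simp: K_def)
    hence "s * \<bar>lor x v\<bar> < 1" using sK by simp
    ultimately have xzn: "lor x z < 0" using xz by linarith
    have z1: "z $ 1 > 0" using H4_future[OF assms(2)] zneg xzn by simp
    define r where "r = sqrt (- lor z z)"
    have r0: "r > 0" unfolding r_def using zneg by simp
    have yH: "(1 / r) *\<^sub>R z \<in> H4" unfolding r_def by (rule normalize_H4) (use zneg z1 in auto)
    have zV: "z \<in> V" unfolding z_def using assms v by (simp add: subspace_add subspace_scale)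
    have yV: "(1 / r) *\<^sub>R z \<in> V" using assms(1) zV by (simp add: subspace_scale)
    have "(1 / r) *\<^sub>R z \<in> span (H4 \<inter> V)" using yH yV by (auto intro: span_base)
    hence "z \<in> span (H4 \<inter> V)" using r0 span_scale[of "(1 / r) *\<^sub>R z" _ r] by simp
    moreover have "x \<in> span (H4 \<inter> V)" using assms by (auto intro: span_base)
    ultimately have "z - x \<in> span (H4 \<inter> V)" by (simp add: span_diff)
    hence "(1 / s) *\<^sub>R (z - x) \<in> span (H4 \<inter> V)" by (simp add: span_scale)
    thus "v \<in> span (H4 \<inter> V)" using s0 unfolding z_def by simp
  qed
qed

lemma dim_le1_parallel:
  fixes S :: "pt set"
  assumes "subspace S" "dim S \<le> 1" "z \<in> S" "z \<noteq> 0" "y \<in> S"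
  shows "\<exists>c. y = c *\<^sub>R z"
proof -
  have sub: "span {z} \<subseteq> S" using assms by (simp add: span_minimal)
  have "dim (span {z}) = 1" using assms(4) dim_singleton[of z] by simp
  hence "span {z} = S" using assms(1,2) sub by (intro subspace_dim_equal) auto
  thus ?thesis using assms(5) by (auto simp: span_singleton)
qed



lemma axis1_H4: "axis 1 1 \<in> H4"
  by (simp add: H4_def lor_inner inner_axis_axis)

lemma hyp_gap:
  assumes "ultra_parallel (hyperplane u) (hyperplane v)" "lor v v > 0"
  obtains \<delta> where "\<delta> > 0" "\<And>x. x \<in> H4 \<Longrightarrow> lor x u = 0 \<Longrightarrow> (lor x v)^2 \<ge> \<delta>"
proof -
  obtain e where e: "e > 0" "\<And>x y. x \<in> hyperplane u \<Longrightarrow> y \<in> hyperplane v \<Longrightarrow> hdist x y \<ge> e"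
    using assms(1) unfolding ultra_parallel_def by blast
  define \<delta> where "\<delta> = lor v v * ((cosh e)^2 - 1)"
  have c1: "cosh e > 1" using cosh_gt1 e(1) by simp
  have "\<delta> > 0" unfolding \<delta>_def using assms(2) c1 by (simp add: power2_eq_square) (smt (verit) mult_less_cancel_left1 mult_pos_pos)
  moreover have "(lor x v)^2 \<ge> \<delta>" if x: "x \<in> H4" "lor x u = 0" for x
  proof -
    define m where "m = sqrt (1 + (lor x v)^2 / lor v v)"
    define y where "y = (1 / m) *\<^sub>R (x - (lor x v / lor v v) *\<^sub>R v)"
    have p: "y \<in> H4" "lor y v = 0" "lor x y = - m" "m \<ge> 1"
      using proj_H4[OF x(1) assms(2)] unfolding m_def y_def by auto
    have "hdist x y \<ge> e" using e(2)[of x y] x p by (simp add: hyperplane_def)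
    hence "m \<ge> cosh e" using hdist_ge[OF x(1) p(1) _ e(1)] p(3) by simp
    hence "m^2 \<ge> (cosh e)^2" using c1 by (intro power_mono) auto
    moreover have "m^2 = 1 + (lor x v)^2 / lor v v" unfolding m_def using assms(2)
      by (simp add: add_nonneg_nonneg)
    ultimately have "(lor x v)^2 / lor v v \<ge> (cosh e)^2 - 1" by simp
    thus ?thesis unfolding \<delta>_def using assms(2) by (simp add: pos_le_divide_eq mult.commute)
  qed
  ultimately show ?thesis using that by blast
qed

lemma exists_perp_H4:
  assumes "lor u u > 0"
  shows "\<exists>x\<in>H4. lor x u = 0"
  using proj_H4(1,2)[OF axis1_H4 assms] by blast

lemma hyp_timelike:
  assumes "lor u u > 0" "lor v v > 0" "ultra_parallel (hyperplane u) (hyperplane v)"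
  shows "lor (v - (lor u v / lor u u) *\<^sub>R u) (v - (lor u v / lor u u) *\<^sub>R u) < 0"
proof (rule ccontr)
  define v' where "v' = v - (lor u v / lor u u) *\<^sub>R u"
  assume "\<not> ?thesis"
  hence vv: "lor v' v' \<ge> 0" unfolding v'_def by simp
  obtain \<delta> where d: "\<delta> > 0" "\<And>x. x \<in> H4 \<Longrightarrow> lor x u = 0 \<Longrightarrow> (lor x v)^2 \<ge> \<delta>"
    using hyp_gap[OF assms(3,2)] by blast
  have vu: "lor v' u = 0" unfolding v'_def using assms(1) by (simp add: lor_simps lor_sym[of v u])
  have xv: "lor x v = lor x v'" if "lor x u = 0" for x
    unfolding v'_def using that by (simp add: lor_simps)
  obtain x0 where x0: "x0 \<in> H4" "lor x0 u = 0" using exists_perp_H4[OF assms(1)] by blast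
  have x0x0: "lor x0 x0 = -1" using x0 by (simp add: H4_def)
  define a where "a = - lor v' x0"
  define r where "r = v' - a *\<^sub>R x0"
  have rx0: "lor r x0 = 0" unfolding r_def a_def using x0x0 by (simp add: lor_simps)
  have ru: "lor r u = 0" unfolding r_def using vu x0 by (simp add: lor_simps)
  have rr: "lor r r = lor v' v' + a^2"
    unfolding r_def a_def using x0x0 by (simp add: lor_simps lor_sym[of x0 v'] power2_eq_square algebra_simps)
  have vr: "v' = r + a *\<^sub>R x0" by (simp add: r_def)
  have rv: "lor r v' = lor r r" unfolding vr using rx0 by (simp add: lor_simps)
  show False
  proof (cases "a = 0")
    case True
    hence "lor x0 v' = 0" unfolding a_def by (simp add: lor_sym)
    hence "(lor x0 v)^2 = 0" using xv[OF x0(2)] by simp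
    thus False using d(2)[OF x0] d(1) by simp
  next
    case False
    define R where "R = lor r r"
    have a2: "a^2 > 0" using False by simp
    have Ra: "R \<ge> a^2" unfolding R_def using rr vv by simp
    have R0: "R > 0" using Ra a2 by linarith
    define \<epsilon> where "\<epsilon> = min (1/2) (\<delta> / (2 * a^2))"
    have ep: "\<epsilon> > 0" "\<epsilon> \<le> 1/2" "a^2 * \<epsilon> \<le> \<delta> / 2"
      unfolding \<epsilon>_def using d(1) a2 by (auto simp: min_def field_simps)
    define \<theta> where "\<theta> = 1 - \<epsilon>"
    define s where "s = \<theta> * a / R"
    define z where "z = x0 + s *\<^sub>R r"
    have zz: "lor z z = -1 + \<theta>^2 * a^2 / R"
      unfolding z_def s_def using x0x0 rx0 R0 by (simp add: lor_simps lor_sym[of x0 r] R_def[symmetric] power2_eq_square field_simps)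
    have zv: "lor z v' = - a * \<epsilon>"
      unfolding z_def s_def \<theta>_def using R0 rv by (simp add: lor_simps a_def lor_sym[of x0] R_def[symmetric] field_simps)
    have zu: "lor z u = 0" unfolding z_def using x0 ru by (simp add: lor_simps)
    have x0z: "lor x0 z = -1" unfolding z_def using x0x0 rx0 by (simp add: lor_simps lor_sym[of x0 r])
    have t1: "\<theta>^2 * a^2 / R \<le> \<theta>^2"
      using Ra R0 by (simp add: divide_le_eq mult_left_mono)
    define D where "D = - lor z z"
    have "1 - \<theta>^2 = \<epsilon> * (2 - \<epsilon>)" unfolding \<theta>_def by (simp add: power2_eq_square algebra_simps)
    also have "\<dots> \<ge> \<epsilon>" using ep by (simp add: mult_le_cancel_left1)
    finally have DE: "D \<ge> \<epsilon>" unfolding D_def using zz t1 by simp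
    have D0: "D > 0" using DE ep by simp
    have z1: "z $ 1 > 0" using H4_future[OF x0(1), of z] D0 x0z unfolding D_def by simp
    define x where "x = (1 / sqrt D) *\<^sub>R z"
    have xH: "x \<in> H4" unfolding x_def D_def by (rule normalize_H4) (use D0 z1 D_def in auto)
    have xu: "lor x u = 0" unfolding x_def using zu by (simp add: lor_simps)
    have "(lor x v)^2 = (lor z v')^2 / D"
      using xv[OF xu] unfolding x_def using D0 by (simp add: lor_simps power_divide power2_eq_square)
    also have "\<dots> = a^2 * \<epsilon>^2 / D" using zv by (simp add: power2_eq_square)
    also have "\<dots> \<le> a^2 * \<epsilon>^2 / \<epsilon>" using DE ep D0 a2
      by (intro divide_left_mono) auto
    also have "\<dots> = a^2 * \<epsilon>" using ep by (simp add: power2_eq_square)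
    also have "\<dots> < \<delta>" using ep d(1) by simp
    finally show False using d(2)[OF xH xu] by simp
  qed
qed

lemma lor_ef:
  assumes "lor e e = -1" "lor f f = 1" "lor e f = 0"
  shows "lor (a *\<^sub>R e + b *\<^sub>R f) (c *\<^sub>R e + d *\<^sub>R f) = - a * c + b * d"
  using assms by (simp add: lor_simps lor_sym[of f e])

lemma ef_zero:
  assumes "lor e e = -1" "lor f f = 1" "lor e f = 0" "z \<in> span {e, f}" "lor z e = 0" "lor z f = 0"
  shows "z = 0"
proof -
  obtain a b where z: "z = a *\<^sub>R e + b *\<^sub>R f" using span2_decomp[OF assms(4)] by blast
  have "lor z e = - a" "lor z f = b" unfolding z using assms(1-3) by (simp_all add: lor_simps lor_sym[of f e])
  thus ?thesis using assms(5,6) z by simp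
qed

lemma frame:
  assumes u: "lor u u > 0" and v: "lor v v > 0" and up: "ultra_parallel (hyperplane u) (hyperplane v)"
  shows "\<exists>e f. lor e e = -1 \<and> e $ 1 > 0 \<and> lor f f = 1 \<and> lor e f = 0 \<and>
     u \<in> span {e, f} \<and> v \<in> span {e, f} \<and>
     (\<forall>z\<in>span {e, f}. refl u (refl v z) = z \<longrightarrow> z = 0) \<and>
     (\<forall>z. refl u (refl v z) = - z \<longrightarrow> z = 0)"
proof -
  define U where "U = lor u u"
  define C where "C = lor u v"
  define v' where "v' = v - (C / U) *\<^sub>R u"
  define N where "N = lor v' v'"
  have N0: "N < 0" unfolding N_def v'_def U_def C_def using hyp_timelike[OF u v up] .
  have vu: "lor v' u = 0" unfolding v'_def U_def C_def using u by (simp add: lor_simps lor_sym[of v u])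
  have v1: "v' $ 1 \<noteq> 0" using timelike_bound[of v'] N0 unfolding N_def by auto
  define \<sigma> where "\<sigma> = (if v' $ 1 > 0 then 1 else -1 :: real)"
  have s2: "\<sigma> * \<sigma> = 1" unfolding \<sigma>_def by simp
  define e where "e = (\<sigma> / sqrt (- N)) *\<^sub>R v'"
  define f where "f = (1 / sqrt U) *\<^sub>R u"
  have sN: "sqrt (- N) > 0" using N0 by simp
  have sU: "sqrt U > 0" using u U_def by simp
  have ee: "lor e e = -1" unfolding e_def using N0 s2 by (simp add: lor_simps N_def[symmetric] power2_eq_square[symmetric] real_sqrt_pow2 mult.assoc[symmetric])
  have e1: "e $ 1 > 0" unfolding e_def \<sigma>_def using sN v1 by (auto simp: zero_less_mult_iff zero_less_divide_iff mult_less_0_iff)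
  have ff: "lor f f = 1" unfolding f_def using u U_def by (simp add: lor_simps power2_eq_square[symmetric])
  have ef: "lor e f = 0" unfolding e_def f_def using vu by (simp add: lor_simps)
  have uef: "u = sqrt U *\<^sub>R f" unfolding f_def using sU by simp
  have ve: "v' = (\<sigma> * sqrt (- N)) *\<^sub>R e" unfolding e_def using sN s2 by (simp add: mult.assoc[symmetric])
  have vdef: "v = v' + (C / U) *\<^sub>R u" unfolding v'_def by simp
  have uS: "u \<in> span {e, f}" unfolding uef by (intro span_scale span_base) auto
  have vS: "v \<in> span {e, f}" unfolding vdef ve uef by (intro span_add span_scale span_base) auto
  have C0: "C \<noteq> 0"
  proof
    assume "C = 0"
    hence "v' = v" unfolding v'_def by simp
    thus False using N0 v unfolding N_def by simp
  qed
  have uu0: "lor u u \<noteq> 0" "lor v v \<noteq> 0" using u v by auto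
  have fix1: "\<forall>z\<in>span {e, f}. refl u (refl v z) = z \<longrightarrow> z = 0"
  proof (intro ballI impI)
    fix z assume zS: "z \<in> span {e, f}" and Mz: "refl u (refl v z) = z"
    have "refl v z = refl u z" using arg_cong[OF Mz, of "refl u"] refl_refl[OF uu0(1)] by simp
    hence eq: "(2 * lor z v / lor v v) *\<^sub>R v = (2 * lor z u / lor u u) *\<^sub>R u" by (simp add: refl_def)
    have ue: "lor u e = 0" using ef uef by (simp add: lor_simps lor_sym[of f])
    have "lor v e = lor v' e" unfolding vdef using ue by (simp add: lor_simps)
    also have "\<dots> = - (\<sigma> * sqrt (- N))" unfolding ve using ee by (simp add: lor_simps)
    finally have vee: "lor v e \<noteq> 0" using sN s2 by auto
    have "(2 * lor z v / lor v v) * lor v e = (2 * lor z u / lor u u) * lor u e"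
      using arg_cong[OF eq, of "\<lambda>w. lor w e"] by (simp add: lor_simps)
    hence zv: "lor z v = 0" using ue vee uu0 by simp
    hence "(2 * lor z u / lor u u) *\<^sub>R u = 0" using eq by simp
    hence zu: "lor z u = 0" using uu0 by auto
    have zf: "lor z f = 0" using zu unfolding uef using sU by (simp add: lor_simps)
    have "lor z v' = 0" unfolding v'_def using zu zv by (simp add: lor_simps)
    hence ze: "lor z e = 0" unfolding e_def by (simp add: lor_simps)
    show "z = 0" by (rule ef_zero[OF ee ff ef zS ze zf])
  qed
  have fix2: "\<forall>z. refl u (refl v z) = - z \<longrightarrow> z = 0"
  proof (intro allI impI)
    fix z assume Mz: "refl u (refl v z) = - z"
    have "refl v z = - refl u z" using arg_cong[OF Mz, of "refl u"] refl_refl[OF uu0(1)] refl_minus by simp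
    hence eq: "2 *\<^sub>R z = (2 * lor z v / lor v v) *\<^sub>R v + (2 * lor z u / lor u u) *\<^sub>R u"
      by (simp add: refl_def algebra_simps scaleR_2)
    define kv where "kv = 2 * lor z v / lor v v"
    define ku where "ku = 2 * lor z u / lor u u"
    have eq': "2 *\<^sub>R z = kv *\<^sub>R v + ku *\<^sub>R u" using eq unfolding kv_def ku_def .
    have a1: "2 * lor z u = kv * C + ku * lor u u"
      using arg_cong[OF eq', of "\<lambda>w. lor w u"] by (simp add: lor_simps C_def lor_sym[of v u])
    have a2: "ku * lor u u = 2 * lor z u" unfolding ku_def using uu0 by simp
    have a3: "2 * lor z v = kv * lor v v + ku * C"
      using arg_cong[OF eq', of "\<lambda>w. lor w v"] by (simp add: lor_simps C_def)
    have a4: "kv * lor v v = 2 * lor z v" unfolding kv_def using uu0 by simp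
    have "kv = 0" using a1 a2 C0 by simp
    moreover have "ku = 0" using a3 a4 C0 by simp
    ultimately show "z = 0" using eq' by simp
  qed
  show ?thesis
    by (intro exI[of _ e] exI[of _ f]) (use ee e1 ff ef uS vS fix1 fix2 in auto)
qed



lemma linear_M: "linear (\<lambda>x. refl u (refl v x))"
  using linear_compose[OF linear_refl[of v] linear_refl[of u]] by (simp add: o_def)

lemma axis_eq:
  assumes ee: "lor e e = -1" and ff: "lor f f = 1" and ef: "lor e f = 0"
    and uS: "u \<in> span {e, f}" and vS: "v \<in> span {e, f}"
    and fix1: "\<forall>z\<in>span {e, f}. refl u (refl v z) = z \<longrightarrow> z = 0"
    and fix2: "\<forall>z. refl u (refl v z) = - z \<longrightarrow> z = 0"
    and u: "lor u u > 0" and v: "lor v v > 0"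
    and geo: "geodesic L" and AM: "\<forall>x\<in>H4. A x = refl u (refl v x)" and inv: "A ` L = L"
  shows "L = H4 \<inter> span {e, f}"
proof -
  define M where "M = (\<lambda>x. refl u (refl v x))"
  have linM: "linear M" unfolding M_def by (rule linear_M)
  have Mlor: "lor (M x) (M y) = lor x y" for x y
    unfolding M_def using u v refl_lor by simp
  obtain V where V: "subspace V" "dim V = 1 + 1" "L = H4 \<inter> V" "L \<noteq> {}"
    using geo unfolding geodesic_def tg_subspace_def by blast
  obtain x where xL: "x \<in> L" using V(4) by blast
  have xH: "x \<in> H4" "x \<in> V" using xL V(3) by auto
  have spanL: "span L = V" using span_H4[OF V(1) xH] V(3) by simp
  have MLL: "M ` L = L"
  proof -
    have "M ` L = A ` L" using AM V(3) unfolding M_def by (auto simp: image_def)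
    thus ?thesis using inv by simp
  qed
  have MV: "M z \<in> V" if "z \<in> V" for z
  proof -
    have "M ` V = span (M ` L)" using span_linear_image[OF linM, of L] spanL by simp
    thus ?thesis using MLL spanL that by auto
  qed
  define W where "W = span {e, f}"
  have subW: "subspace W" unfolding W_def by simp
  have MW: "M w \<in> W" if "w \<in> W" for w
  proof -
    have "refl v w \<in> W" using that vS unfolding refl_def W_def by (intro span_diff span_scale) auto
    thus ?thesis using uS unfolding M_def refl_def[of u] W_def by (intro span_diff span_scale) auto
  qed
  define w where "w = (- lor x e) *\<^sub>R e + (lor x f) *\<^sub>R f"
  define y where "y = x - w"
  have wW: "w \<in> W" unfolding w_def W_def by (rule span2_mem)
  have ye: "lor y e = 0" unfolding y_def w_def using ee ff ef by (simp add: lor_simps lor_sym[of f e])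
  have yf: "lor y f = 0" unfolding y_def w_def using ee ff ef by (simp add: lor_simps lor_sym[of f e])
  have yW: "lor y s = 0" if "s \<in> W" for s
    using lor_span_zero[of "{e, f}" y s] ye yf that W_def by auto
  have My: "M y = y" unfolding M_def
    using yW[OF uS[folded W_def]] yW[OF vS[folded W_def]] by (simp add: refl_fix)
  have yy: "lor y y \<ge> 0" using timelike_perp_ge[of e y] ee ye by (simp add: lor_sym)
  have xx: "lor x x = lor w w + lor y y"
  proof -
    have "lor w y = 0" using yW[OF wW] by (simp add: lor_sym)
    moreover have "x = w + y" unfolding y_def by simp
    ultimately show ?thesis by (simp add: lor_simps lor_sym[of y w])
  qed
  have xm1: "lor x x = -1" using xH by (simp add: H4_def)
  have Mx: "M x = M w + y" using My linear_add[OF linM, of w y] unfolding y_def by simp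
  define z where "z = M x - x"
  have zw: "z = M w - w" unfolding z_def Mx y_def by simp
  have zW: "z \<in> W" unfolding zw using MW[OF wW] wW subW by (simp add: subspace_diff)
  have zV: "z \<in> V" unfolding z_def using MV[OF xH(2)] xH(2) V(1) by (simp add: subspace_diff)
  have z0: "z \<noteq> 0"
  proof
    assume "z = 0"
    hence "M w = w" unfolding zw by simp
    hence "w = 0" using fix1 wW unfolding W_def M_def by auto
    thus False using xx yy xm1 by simp
  qed
  show ?thesis
  proof (cases "V \<subseteq> W")
    case True
    have "dim W \<le> 2"
    proof -
      have "dim W \<le> card {e, f}" unfolding W_def by (rule dim_le_card) auto
      also have "\<dots> \<le> 2" by (simp add: card_insert_if)
      finally show ?thesis .
    qed
    hence "V = W" using subspace_dim_equal[OF V(1) subW True] V(2) by (simp add: one_add_one)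
    thus ?thesis using V(3) W_def by simp
  next
    case False
    define S where "S = V \<inter> W"
    have subS: "subspace S" unfolding S_def using V(1) subW by (simp add: subspace_inter)
    have "span S = S" "span V = V" using subS V(1) by simp_all
    moreover have "S \<subset> V" using False unfolding S_def by auto
    ultimately have "span S \<subset> span V" by metis
    hence "dim S < dim V" by (rule dim_psubset)
    hence dS: "dim S \<le> 1" using V(2) by (simp add: one_add_one)
    have MzS: "M z \<in> S" unfolding S_def using MV[OF zV] MW[OF zW] by simp
    obtain c where c: "M z = c *\<^sub>R z"
      using dim_le1_parallel[OF subS dS _ z0 MzS] zV zW S_def by auto
    have c1: "c \<noteq> 1" using fix1 zW c z0 unfolding W_def M_def by auto
    have cm1: "c \<noteq> -1" using fix2 c z0 unfolding M_def by auto
    have "lor z z = c^2 * lor z z" using Mlor[of z z] c by (simp add: lor_simps power2_eq_square)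
    moreover have "c^2 \<noteq> 1" using c1 cm1 by (simp add: power2_eq_1_iff)
    ultimately have zz: "lor z z = 0" by (metis mult_cancel_right1)
    have Mw: "M w = w + z" unfolding zw by simp
    have "lor w z = lor (M w) (M z)" using Mlor by simp
    also have "\<dots> = c * lor w z" unfolding Mw c using zz by (simp add: lor_simps)
    finally have wz: "lor w z = 0" using c1 by (metis mult_cancel_right1 mult.commute)
    obtain c1' c2' where zd: "z = c1' *\<^sub>R e + c2' *\<^sub>R f" using span2_decomp zW W_def by blast
    define a where "a = - lor x e"
    define b where "b = lor x f"
    have wd: "w = a *\<^sub>R e + b *\<^sub>R f" unfolding w_def a_def b_def by simp
    have q1: "- c1' * c1' + c2' * c2' = 0" using zz unfolding zd using lor_ef[OF ee ff ef] by simp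
    have q2: "- a * c1' + b * c2' = 0" using wz unfolding zd wd using lor_ef[OF ee ff ef] by simp
    have c1n: "c1' \<noteq> 0" using q1 z0 zd by auto
    have "b^2 * c1'^2 = a^2 * c1'^2"
    proof -
      have "b^2 * c1'^2 = b^2 * c2'^2" using q1 by (simp add: power2_eq_square)
      also have "\<dots> = (b * c2')^2" by (simp add: power_mult_distrib)
      also have "\<dots> = (a * c1')^2" using q2 by simp
      finally show ?thesis by (simp add: power_mult_distrib)
    qed
    hence "b^2 = a^2" using c1n by simp
    hence "lor w w = 0" unfolding wd using lor_ef[OF ee ff ef] by (simp add: power2_eq_square)
    thus ?thesis using xx yy xm1 by simp
  qed
qed

lemma null_frame:
  assumes ee: "lor e e = -1" and e1: "e $ 1 > 0" and ff: "lor f f = 1" and ef: "lor e f = 0"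
  shows "lor (e + f) (e + f) = 0" "lor (e - f) (e - f) = 0" "(e + f) $ 1 > 0" "(e - f) $ 1 > 0"
    "lor (e + f) (e - f) = -2" "span {e + f, e - f} = span {e, f}"
proof -
  show a: "lor (e + f) (e + f) = 0" "lor (e - f) (e - f) = 0" "lor (e + f) (e - f) = -2"
    using ee ff ef by (simp_all add: lor_simps lor_sym[of f e])
  have eH: "e \<in> H4" using ee e1 by (simp add: H4_def)
  show "(e + f) $ 1 > 0" using H4_future[OF eH, of "e + f"] a ee ef by (simp add: lor_simps)
  show "(e - f) $ 1 > 0" using H4_future[OF eH, of "e - f"] a ee ef by (simp add: lor_simps)
  show "span {e + f, e - f} = span {e, f}"
  proof
    show "span {e + f, e - f} \<subseteq> span {e, f}"
      by (rule span_minimal) (auto intro: span_add span_diff span_base)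
    have "e = (1/2) *\<^sub>R (e + f) + (1/2) *\<^sub>R (e - f)" by (simp add: algebra_simps scaleR_2[symmetric])
    moreover have "f = (1/2) *\<^sub>R (e + f) + (-1/2) *\<^sub>R (e - f)" by (simp add: algebra_simps scaleR_2[symmetric])
    ultimately have "e \<in> span {e + f, e - f}" "f \<in> span {e + f, e - f}" using span2_mem by metis+
    thus "span {e, f} \<subseteq> span {e + f, e - f}" by (intro span_minimal) auto
  qed
qed



definition ptt :: "real \<Rightarrow> pt \<Rightarrow> pt \<Rightarrow> pt" where
  "ptt X a a' = (1/2) *\<^sub>R (X *\<^sub>R a + (1/X) *\<^sub>R a')"
definition tng :: "real \<Rightarrow> pt \<Rightarrow> pt \<Rightarrow> pt" where
  "tng X a a' = (1/2) *\<^sub>R (X *\<^sub>R a - (1/X) *\<^sub>R a')"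

definition nullpair :: "pt \<Rightarrow> pt \<Rightarrow> bool" where
  "nullpair a a' \<longleftrightarrow> lor a a = 0 \<and> lor a' a' = 0 \<and> a $ 1 > 0 \<and> a' $ 1 > 0 \<and> lor a a' = -2"

lemma nullpair_sym: "nullpair a a' \<Longrightarrow> nullpair a' a"
  by (auto simp: nullpair_def lor_sym)

lemma ptt_lor:
  assumes "nullpair a a'" "X > 0"
  shows "lor (ptt X a a') (ptt X a a') = -1" "lor (tng X a a') (tng X a a') = 1"
    "lor (ptt X a a') (tng X a a') = 0"
  using assms by (simp_all add: nullpair_def ptt_def tng_def lor_simps lor_sym[of a' a] field_simps)

lemma ptt_H4:
  assumes "nullpair a a'" "X > 0"
  shows "ptt X a a' \<in> H4"
proof -
  have "(ptt X a a') $ 1 > 0" using assms unfolding nullpair_def ptt_def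
    by (simp add: add_pos_pos)
  thus ?thesis using ptt_lor[OF assms] by (simp add: H4_def)
qed

lemma ptt_span: "ptt X a a' \<in> span {a, a'}" "tng X a a' \<in> span {a, a'}"
proof -
  have "ptt X a a' = (X/2) *\<^sub>R a + (1/(2*X)) *\<^sub>R a'" by (simp add: ptt_def algebra_simps)
  thus "ptt X a a' \<in> span {a, a'}" using span2_mem by metis
  have "tng X a a' = (X/2) *\<^sub>R a + (-(1/(2*X))) *\<^sub>R a'" by (simp add: tng_def algebra_simps)
  thus "tng X a a' \<in> span {a, a'}" using span2_mem by metis
qed

lemma span_pt:
  assumes "X > 0"
  shows "span {a, a'} \<subseteq> span {ptt X a a', tng X a a'}"
proof -
  have "a = (1/X) *\<^sub>R (ptt X a a' + tng X a a')" using assms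
    by (simp add: ptt_def tng_def algebra_simps scaleR_2[symmetric])
  hence "a \<in> span {ptt X a a', tng X a a'}" by (metis span2_mem scaleR_add_right)
  moreover have "a' = X *\<^sub>R (ptt X a a' - tng X a a')" using assms
    by (simp add: ptt_def tng_def algebra_simps scaleR_2[symmetric])
  hence "a' \<in> span {ptt X a a', tng X a a'}"
    by (metis (no_types) span2_mem scaleR_diff_right diff_conv_add_uminus scaleR_minus_right scaleR_minus_left)
  ultimately show ?thesis by (intro span_minimal) auto
qed

lemma perp_in_span:
  assumes "nullpair a a'" "X > 0" "w \<in> span {a, a'}" "lor w (ptt X a a') = 0"
  shows "\<exists>c. w = c *\<^sub>R tng X a a'"
proof -
  have ws: "w \<in> span {ptt X a a', tng X a a'}" using span_pt[OF assms(2)] assms(3) by auto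
  obtain \<alpha> \<beta> where w: "w = \<alpha> *\<^sub>R ptt X a a' + \<beta> *\<^sub>R tng X a a'" using span2_decomp[OF ws] by blast
  have "lor w (ptt X a a') = - \<alpha>" unfolding w using ptt_lor[OF assms(1,2)]
    by (simp add: lor_simps lor_sym[of "tng X a a'" "ptt X a a'"])
  thus ?thesis using assms(4) w by auto
qed

lemma up_nonzero:
  assumes na: "nullpair a a'" and nb: "nullpair b b'" and e: "e > 0"
    and d: "\<And>x y. x \<in> H4 \<Longrightarrow> x \<in> span {a, a'} \<Longrightarrow> y \<in> H4 \<Longrightarrow> y \<in> span {b, b'} \<Longrightarrow> hdist x y \<ge> e"
  shows "lor a b \<noteq> 0"
proof
  assume ab: "lor a b = 0"
  have bk: "b = (b $ 1 / a $ 1) *\<^sub>R a"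
    using null_parallel[of a b] na nb ab unfolding nullpair_def by auto
  define k where "k = b $ 1 / a $ 1"
  have k0: "k > 0" unfolding k_def using na nb by (simp add: nullpair_def)
  have bk': "b = k *\<^sub>R a" using bk k_def by simp
  have ab': "lor a b' = -2 / k"
  proof -
    have "lor b b' = -2" using nb by (simp add: nullpair_def)
    hence "k * lor a b' = -2" unfolding bk' by (simp add: lor_simps)
    thus ?thesis using k0 by (simp add: field_simps)
  qed
  have a'b: "lor a' b = - 2 * k" unfolding bk' using na by (simp add: nullpair_def lor_simps lor_sym[of a' a])
  define D where "D = - lor a' b'"
  have D0: "D \<ge> 0" unfolding D_def using causal_future_lor_le[of a' b'] na nb by (simp add: nullpair_def)
  define c where "c = cosh e - 1"
  have c0: "c > 0" unfolding c_def using cosh_gt1[OF e] by simp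
  define X where "X = sqrt (k * D / c + 1)"
  have kDc: "k * D / c \<ge> 0" using k0 D0 c0 by simp
  have X0: "X > 0" unfolding X_def using kDc by simp
  have X2: "X^2 = k * D / c + 1" unfolding X_def using kDc by simp
  define Y where "Y = X / k"
  have Y0: "Y > 0" unfolding Y_def using X0 k0 by simp
  define p where "p = ptt X a a'"
  define q where "q = ptt Y b b'"
  have pH: "p \<in> H4" "p \<in> span {a, a'}" unfolding p_def using ptt_H4[OF na X0] ptt_span by auto
  have qH: "q \<in> H4" "q \<in> span {b, b'}" unfolding q_def using ptt_H4[OF nb Y0] ptt_span by auto
  have "lor p q = (1/4) * (X * Y * lor a b + (X / Y) * lor a b' + (Y / X) * lor a' b + lor a' b' / (X * Y))"
    unfolding p_def q_def ptt_def using X0 Y0 by (simp add: lor_simps field_simps)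
  also have "\<dots> = (1/4) * (-4 - D * k / X^2)"
    unfolding ab ab' a'b D_def[symmetric] Y_def using X0 k0
    by (simp add: field_simps power2_eq_square D_def)
  finally have pq: "- lor p q = 1 + D * k / (4 * X^2)" by (simp add: field_simps)
  have "D * k / (4 * X^2) < c"
  proof -
    have "D * k < 4 * c * X^2" unfolding X2 using c0 k0 D0
      by (simp add: field_simps) (intro add_pos_nonneg mult_nonneg_nonneg; simp)
    thus ?thesis using X0 by (simp add: divide_less_eq algebra_simps)
  qed
  hence "- lor p q < cosh e" using pq unfolding c_def by simp
  moreover have "- lor p q \<ge> cosh e" using hdist_ge[OF pH(1) qH(1) d[OF pH qH] e] .
  ultimately show False by simp
qed

lemma common_perp:
  assumes na: "nullpair a a'" and nb: "nullpair b b'"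
    and c1: "lor a b < 0" and c2: "lor a b' < 0" and c3: "lor a' b < 0" and c4: "lor a' b' < 0"
  shows "\<exists>X Y. X > 0 \<and> Y > 0 \<and> lor (tng X a a') (ptt Y b b') = 0 \<and> lor (ptt X a a') (tng Y b b') = 0"
proof -
  define P where "P = sqrt (lor a' b' / lor a b)"
  define Q where "Q = sqrt (lor a' b / lor a b')"
  have P0: "P > 0" unfolding P_def using c1 c4 by (simp add: zero_less_divide_iff)
  have Q0: "Q > 0" unfolding Q_def using c2 c3 by (simp add: zero_less_divide_iff)
  have P2: "P^2 * lor a b = lor a' b'" unfolding P_def using c1 c4 by (simp add: zero_le_divide_iff)
  have Q2: "Q^2 * lor a b' = lor a' b" unfolding Q_def using c2 c3 by (simp add: zero_le_divide_iff)
  define X where "X = sqrt (P * Q)"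
  define Y where "Y = sqrt (P / Q)"
  have X0: "X > 0" unfolding X_def using P0 Q0 by simp
  have Y0: "Y > 0" unfolding Y_def using P0 Q0 by simp
  have XY: "X * Y = P" unfolding X_def Y_def using P0 Q0 by (simp add: real_sqrt_mult[symmetric])
  have XdY: "X / Y = Q" unfolding X_def Y_def using P0 Q0 by (simp add: real_sqrt_divide[symmetric])
  have YdX: "Y / X = 1 / Q" using XdY X0 Y0 by (simp add: field_simps)
  have e1: "X * Y * lor a b = lor a' b' / (X * Y)" unfolding XY using P2 P0 by (simp add: field_simps power2_eq_square)
  have e2: "(X / Y) * lor a b' = (Y / X) * lor a' b" unfolding XdY YdX using Q2 Q0 by (simp add: field_simps power2_eq_square)
  have "lor (tng X a a') (ptt Y b b') = (1/4) * ((X * Y * lor a b - lor a' b' / (X * Y)) + ((X / Y) * lor a b' - (Y / X) * lor a' b))"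
    unfolding tng_def ptt_def using X0 Y0 by (simp add: lor_simps field_simps)
  also have "\<dots> = 0" using e1 e2 by simp
  finally have r1: "lor (tng X a a') (ptt Y b b') = 0" .
  have "lor (ptt X a a') (tng Y b b') = (1/4) * ((X * Y * lor a b - lor a' b' / (X * Y)) - ((X / Y) * lor a b' - (Y / X) * lor a' b))"
    unfolding tng_def ptt_def using X0 Y0 by (simp add: lor_simps field_simps)
  also have "\<dots> = 0" using e1 e2 by simp
  finally have r2: "lor (ptt X a a') (tng Y b b') = 0" .
  show ?thesis using X0 Y0 r1 r2 by blast
qed



lemma refl_form:
  assumes pp: "lor p p = -1" and tt: "lor t t = 1" and pt: "lor p t = 0"
    and uS: "u \<in> span {p, t}" and uu: "lor u u > 0"
  shows "\<exists>c s. c^2 - s^2 = 1 \<and> refl u p = c *\<^sub>R p + s *\<^sub>R t \<and> refl u t = (-s) *\<^sub>R p + (-c) *\<^sub>R t"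
proof -
  obtain \<alpha> \<beta> where u: "u = \<alpha> *\<^sub>R p + \<beta> *\<^sub>R t" using span2_decomp[OF uS] by blast
  define N where "N = lor u u"
  have N: "N = - \<alpha> * \<alpha> + \<beta> * \<beta>" unfolding N_def u using lor_ef[OF pp tt pt] by simp
  have N0: "N > 0" using uu N_def by simp
  have pu: "lor p u = - \<alpha>" unfolding u using pp pt by (simp add: lor_simps)
  have tu: "lor t u = \<beta>" unfolding u using tt pt by (simp add: lor_simps lor_sym[of t p])
  define c where "c = 1 + (2 * \<alpha> / N) * \<alpha>"
  define s where "s = (2 * \<alpha> / N) * \<beta>"
  have r1: "refl u p = c *\<^sub>R p + s *\<^sub>R t"
  proof -
    have "refl u p = p + (2 * \<alpha> / N) *\<^sub>R u" unfolding refl_def pu N_def[symmetric] by simp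
    also have "\<dots> = c *\<^sub>R p + s *\<^sub>R t" unfolding u c_def s_def by (simp add: algebra_simps)
    finally show ?thesis .
  qed
  have cc: "1 - (2 * \<beta> / N) * \<beta> = - c" unfolding c_def using N0 by (simp add: field_simps) (simp add: N algebra_simps)
  have r2: "refl u t = (-s) *\<^sub>R p + (-c) *\<^sub>R t"
  proof -
    have "refl u t = t - (2 * \<beta> / N) *\<^sub>R u" unfolding refl_def tu N_def[symmetric] by simp
    also have "\<dots> = (- ((2 * \<beta> / N) * \<alpha>)) *\<^sub>R p + (1 - (2 * \<beta> / N) * \<beta>) *\<^sub>R t"
      unfolding u by (simp add: algebra_simps)
    also have "\<dots> = (-s) *\<^sub>R p + (-c) *\<^sub>R t" unfolding cc s_def by (simp add: mult.commute)
    finally show ?thesis .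
  qed
  have bb: "\<beta> * \<beta> = N + \<alpha> * \<alpha>" using N by simp
  have "c^2 - s^2 = ((N + 2*\<alpha>*\<alpha>)^2 - 4*\<alpha>*\<alpha>*(\<beta>*\<beta>)) / N^2"
    unfolding c_def s_def using N0 by (simp add: field_simps power2_eq_square)
  also have "\<dots> = ((N + 2*\<alpha>*\<alpha>)^2 - 4*\<alpha>*\<alpha>*(N + \<alpha>*\<alpha>)) / N^2" using bb by simp
  also have "(N + 2*\<alpha>*\<alpha>)^2 - 4*\<alpha>*\<alpha>*(N + \<alpha>*\<alpha>) = N^2"
    by (simp add: power2_eq_square algebra_simps)
  also have "N^2 / N^2 = 1" using N0 by simp
  finally have "c^2 - s^2 = 1" .
  thus ?thesis using r1 r2 by blast
qed

lemma refl_comb: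
  assumes "refl u p = c *\<^sub>R p + s *\<^sub>R t" "refl u t = (-s) *\<^sub>R p + (-c) *\<^sub>R t"
  shows "refl u (a *\<^sub>R p + b *\<^sub>R t) = (a * c - b * s) *\<^sub>R p + (a * s - b * c) *\<^sub>R t"
proof -
  have "refl u (a *\<^sub>R p + b *\<^sub>R t) = a *\<^sub>R (c *\<^sub>R p + s *\<^sub>R t) + b *\<^sub>R ((-s) *\<^sub>R p + (-c) *\<^sub>R t)"
    by (simp add: refl_add refl_scale assms)
  also have "\<dots> = (a * c - b * s) *\<^sub>R p + (a * s - b * c) *\<^sub>R t"
    by (simp add: scaleR_add_right scaleR_diff_left algebra_simps)
  finally show ?thesis .
qed

lemma M_form:
  assumes pp: "lor p p = -1" and tt: "lor t t = 1" and pt: "lor p t = 0"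
    and uS: "u \<in> span {p, t}" and uu: "lor u u > 0"
    and vS: "v \<in> span {p, t}" and vv: "lor v v > 0"
  shows "\<exists>C D. C^2 - D^2 = 1 \<and> (\<forall>a b. refl u (refl v (a *\<^sub>R p + b *\<^sub>R t)) = (a * C + b * D) *\<^sub>R p + (a * D + b * C) *\<^sub>R t)"
proof -
  obtain c1 s1 where f1: "c1^2 - s1^2 = 1" "refl u p = c1 *\<^sub>R p + s1 *\<^sub>R t" "refl u t = (-s1) *\<^sub>R p + (-c1) *\<^sub>R t"
    using refl_form[OF pp tt pt uS uu] by blast
  obtain c2 s2 where f2: "c2^2 - s2^2 = 1" "refl v p = c2 *\<^sub>R p + s2 *\<^sub>R t" "refl v t = (-s2) *\<^sub>R p + (-c2) *\<^sub>R t"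
    using refl_form[OF pp tt pt vS vv] by blast
  define C where "C = c1 * c2 - s1 * s2"
  define D where "D = c2 * s1 - s2 * c1"
  have "C^2 - D^2 = (c1^2 - s1^2) * (c2^2 - s2^2)" unfolding C_def D_def by (simp add: power2_eq_square algebra_simps)
  hence CD: "C^2 - D^2 = 1" using f1(1) f2(1) by simp
  have "refl u (refl v (a *\<^sub>R p + b *\<^sub>R t)) = (a * C + b * D) *\<^sub>R p + (a * D + b * C) *\<^sub>R t" for a b
  proof -
    have "refl u (refl v (a *\<^sub>R p + b *\<^sub>R t)) = ((a * c2 - b * s2) * c1 - (a * s2 - b * c2) * s1) *\<^sub>R p + ((a * c2 - b * s2) * s1 - (a * s2 - b * c2) * c1) *\<^sub>R t"
      by (simp add: refl_comb[OF f2(2,3)] refl_comb[OF f1(2,3)])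
    also have "\<dots> = (a * C + b * D) *\<^sub>R p + (a * D + b * C) *\<^sub>R t"
      unfolding C_def D_def by (simp add: algebra_simps)
    finally show ?thesis .
  qed
  thus ?thesis using CD by blast
qed

lemma link_core:
  assumes pp: "lor p p = -1" and tt: "lor t t = 1" and pt: "lor p t = 0"
    and uS: "u \<in> span {p, t}" and uu: "lor u u > 0"
    and vS: "v \<in> span {p, t}" and vv: "lor v v > 0"
    and lb: "linear \<beta>" and bl: "\<And>x y. lor (\<beta> x) (\<beta> y) = lor x y" and bb: "\<And>x. \<beta> (\<beta> x) = x"
    and bp: "\<beta> p = p" and bt: "\<beta> t = - t"
  shows "refl u (refl v (\<beta> (refl u (refl v (\<beta> x))))) = x"
    "\<beta> (refl u (refl v (\<beta> (refl u (refl v x))))) = x"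
proof -
  obtain C D where CD: "C^2 - D^2 = 1"
    and M: "\<And>a b. refl u (refl v (a *\<^sub>R p + b *\<^sub>R t)) = (a * C + b * D) *\<^sub>R p + (a * D + b * C) *\<^sub>R t"
    using M_form[OF pp tt pt uS uu vS vv] by blast
  have B: "\<beta> (a *\<^sub>R p + b *\<^sub>R t) = a *\<^sub>R p + (- b) *\<^sub>R t" for a b
    using linear_add[OF lb] linear_scale[OF lb] bp bt by simp
  define M' where "M' = (\<lambda>x. refl u (refl v x))"
  have M'y: "M' y = y" if "lor y p = 0" "lor y t = 0" for y
  proof -
    have "lor y u = 0" using lor_span_zero[of "{p, t}" y u] that uS by auto
    moreover have "lor y v = 0" using lor_span_zero[of "{p, t}" y v] that vS by auto
    ultimately show ?thesis unfolding M'_def by (simp add: refl_fix)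
  qed
  have M'add: "M' (x + y) = M' x + M' y" for x y unfolding M'_def by (simp add: refl_add)
  have badd: "\<beta> (x + y) = \<beta> x + \<beta> y" for x y using linear_add[OF lb] .
  define a where "a = - lor x p"
  define b where "b = lor x t"
  define w where "w = a *\<^sub>R p + b *\<^sub>R t"
  define y where "y = x - w"
  have x: "x = w + y" unfolding y_def by simp
  have yp: "lor y p = 0" "lor y t = 0" unfolding y_def w_def a_def b_def using pp tt pt
    by (simp_all add: lor_simps lor_sym[of t p])
  have byp: "lor (\<beta> y) p = 0" "lor (\<beta> y) t = 0"
  proof -
    show "lor (\<beta> y) p = 0" using bl[of y p] bp yp by simp
    have "lor (\<beta> y) (\<beta> t) = 0" using bl[of y t] yp by simp
    thus "lor (\<beta> y) t = 0" using bt by (simp add: lor_minus_right)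
  qed
  have CD': "C * C - D * D = 1" using CD by (simp add: power2_eq_square)
  have M'ab: "M' (a' *\<^sub>R p + b' *\<^sub>R t) = (a' * C + b' * D) *\<^sub>R p + (a' * D + b' * C) *\<^sub>R t" for a' b'
    unfolding M'_def by (rule M)
  have Bab: "\<beta> (a' *\<^sub>R p + b' *\<^sub>R t + z) = a' *\<^sub>R p + (- b') *\<^sub>R t + \<beta> z" for a' b' z
    using badd[of "a' *\<^sub>R p + b' *\<^sub>R t" z] B by simp
  have Mab: "M' (a' *\<^sub>R p + b' *\<^sub>R t + z) = (a' * C + b' * D) *\<^sub>R p + (a' * D + b' * C) *\<^sub>R t + M' z" for a' b' z
    using M'add[of "a' *\<^sub>R p + b' *\<^sub>R t" z] M'ab by simp
  have My: "M' y = y" using M'y[OF yp] .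
  have Mby: "M' (\<beta> y) = \<beta> y" using M'y[OF byp] .
  have xw: "x = a *\<^sub>R p + b *\<^sub>R t + y" unfolding x w_def by simp
  show "refl u (refl v (\<beta> (refl u (refl v (\<beta> x))))) = x"
  proof -
    have "M' (\<beta> (M' (\<beta> x))) = ((a * C + (- b) * D) * C + (- (a * D + (- b) * C)) * D) *\<^sub>R p +
        ((a * C + (- b) * D) * D + (- (a * D + (- b) * C)) * C) *\<^sub>R t + y"
      unfolding xw Bab Mab Mby bb My ..
    also have "\<dots> = (a * (C * C - D * D)) *\<^sub>R p + (b * (C * C - D * D)) *\<^sub>R t + y"
      by (simp add: algebra_simps)
    also have "\<dots> = x" unfolding CD' xw by simp
    finally show ?thesis unfolding M'_def .
  qed
  show "\<beta> (refl u (refl v (\<beta> (refl u (refl v x))))) = x"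
  proof -
    have "\<beta> (M' (\<beta> (M' x))) = ((a * C + b * D) * C + (- (a * D + b * C)) * D) *\<^sub>R p +
        (- ((a * C + b * D) * D + (- (a * D + b * C)) * C)) *\<^sub>R t + \<beta> (\<beta> y)"
      unfolding xw Bab Mab Mby My ..
    also have "\<dots> = (a * (C * C - D * D)) *\<^sub>R p + (b * (C * C - D * D)) *\<^sub>R t + y"
      unfolding bb by (simp add: algebra_simps)
    also have "\<dots> = x" unfolding CD' xw by simp
    finally show ?thesis unfolding M'_def .
  qed
qed



lemma pure_axis:
  assumes "pure_hyperbolic A" "axis_of A L"
  shows "\<exists>u v a a'. lor u u > 0 \<and> lor v v > 0 \<and> (\<forall>x\<in>H4. A x = refl u (refl v x)) \<and> nullpair a a' \<and>
     L = H4 \<inter> span {a, a'} \<and> u \<in> span {a, a'} \<and> v \<in> span {a, a'} \<and>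
     (\<forall>z\<in>span {a, a'}. refl u (refl v z) = z \<longrightarrow> z = 0)"
proof -
  obtain u v where uv: "lor u u > 0" "lor v v > 0" "ultra_parallel (hyperplane u) (hyperplane v)"
    "\<forall>x\<in>H4. A x = refl u (refl v x)"
    using assms(1) unfolding pure_hyperbolic_def by blast
  obtain e f where ef: "lor e e = -1" "e $ 1 > 0" "lor f f = 1" "lor e f = 0"
     "u \<in> span {e, f}" "v \<in> span {e, f}"
     "\<forall>z\<in>span {e, f}. refl u (refl v z) = z \<longrightarrow> z = 0"
     "\<forall>z. refl u (refl v z) = - z \<longrightarrow> z = 0"
    using frame[OF uv(1-3)] by blast
  have L: "L = H4 \<inter> span {e, f}"
    using axis_eq[OF ef(1,3,4,5,6,7,8) uv(1,2)] assms(2) uv(4) unfolding axis_of_def by blast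
  have nf: "lor (e + f) (e + f) = 0" "lor (e - f) (e - f) = 0" "(e + f) $ 1 > 0" "(e - f) $ 1 > 0"
    "lor (e + f) (e - f) = -2" "span {e + f, e - f} = span {e, f}"
    using null_frame[OF ef(1-4)] by auto
  have "nullpair (e + f) (e - f)" using nf unfolding nullpair_def by auto
  thus ?thesis using uv L ef nf(6)
    by (intro exI[of _ u] exI[of _ v] exI[of _ "e + f"] exI[of _ "e - f"]) auto
qed

lemma beta_exists:
  assumes pH: "p \<in> H4" and qH: "q \<in> H4" and tt: "lor t t = 1" and pt: "lor p t = 0"
    and ss: "lor s s = 1" and qs: "lor q s = 0" and tq: "lor t q = 0" and ps: "lor p s = 0"
  shows "\<exists>\<beta>. linear \<beta> \<and> (\<forall>x y. lor (\<beta> x) (\<beta> y) = lor x y) \<and> (\<forall>x. \<beta> (\<beta> x) = x) \<and> isometry \<beta> \<and>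
    (\<exists>x\<in>H4. \<beta> x \<noteq> x) \<and> \<beta> p = p \<and> \<beta> t = - t \<and> \<beta> q = q \<and> \<beta> s = - s"
proof -
  have pp: "lor p p = -1" using pH by (simp add: H4_def)
  have t0: "lor t t \<noteq> 0" using tt by simp
  define x0 where "x0 = (5/4) *\<^sub>R p + (3/4) *\<^sub>R t"
  have x0x0: "lor x0 x0 = -1" unfolding x0_def using pp tt pt by (simp add: lor_simps lor_sym[of t p])
  have px0: "lor p x0 = -5/4" unfolding x0_def using pp pt by (simp add: lor_simps)
  have x0H: "x0 \<in> H4" using H4_future[OF pH, of x0] x0x0 px0 by (simp add: H4_def)
  have tne: "t \<noteq> 0" using tt by auto
  define m where "m = s - lor s t *\<^sub>R t"
  have mt: "lor m t = 0" unfolding m_def using tt by (simp add: lor_simps)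
  have mp: "lor m p = 0" unfolding m_def using ps pt by (simp add: lor_simps lor_sym[of s p] lor_sym[of t p])
  have mq: "lor q m = 0" unfolding m_def using qs tq by (simp add: lor_simps lor_sym[of t q])
  have sm: "s = m + lor s t *\<^sub>R t" unfolding m_def by simp
  have qt: "lor q t = 0" using tq by (simp add: lor_sym[of t q])
  have pm: "lor p m = 0" using mp by (simp add: lor_sym[of m p])
  have tm: "lor t m = 0" using mt by (simp add: lor_sym[of m t])
  show ?thesis
  proof (cases "m = 0")
    case True
    define \<beta> where "\<beta> = refl t"
    have s': "s = lor s t *\<^sub>R t" using sm True by simp
    have "\<beta> x0 = (5/4) *\<^sub>R p - (3/4) *\<^sub>R t" unfolding \<beta>_def x0_def
      using refl_fix[of p t] pt refl_self[OF t0] by (simp add: refl_add refl_scale)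
    hence "\<beta> x0 \<noteq> x0"
    proof (intro notI)
      assume a1: "\<beta> x0 = (5/4) *\<^sub>R p - (3/4) *\<^sub>R t" and a2: "\<beta> x0 = x0"
      have "lor (\<beta> x0) t = - 3/4" unfolding a1 using pt tt by (simp add: lor_simps)
      moreover have "lor x0 t = 3/4" unfolding x0_def using pt tt by (simp add: lor_simps)
      ultimately show False using a2 by simp
    qed
    moreover have "\<beta> p = p" unfolding \<beta>_def using pt by (simp add: refl_fix)
    moreover have "\<beta> t = - t" unfolding \<beta>_def using refl_self[OF t0] .
    moreover have "\<beta> q = q" unfolding \<beta>_def using qt by (simp add: refl_fix)
    moreover have "\<beta> s = - s" unfolding \<beta>_def by (subst (1 2) s') (simp add: refl_scale refl_self[OF t0])
    moreover have "isometry \<beta>" unfolding \<beta>_def using isometry_refl tt by simp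
    moreover have "linear \<beta>" unfolding \<beta>_def by (rule linear_refl)
    moreover have "\<forall>x y. lor (\<beta> x) (\<beta> y) = lor x y" unfolding \<beta>_def using refl_lor[OF t0] by simp
    moreover have "\<forall>x. \<beta> (\<beta> x) = x" unfolding \<beta>_def using refl_refl[OF t0] by simp
    ultimately show ?thesis using x0H by blast
  next
    case False
    have mm: "lor m m > 0" using timelike_perp[of p m] pp pm False by simp
    have m0: "lor m m \<noteq> 0" using mm by simp
    define \<beta> where "\<beta> = (\<lambda>x. refl t (refl m x))"
    have "\<beta> x0 = (5/4) *\<^sub>R p - (3/4) *\<^sub>R t" unfolding \<beta>_def x0_def
      using refl_fix[of p t] refl_fix[of p m] refl_fix[of t m] pt mp mt refl_self[OF t0]
      by (simp add: refl_add refl_scale lor_sym[of t m] lor_sym[of p m])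
    hence "\<beta> x0 \<noteq> x0"
    proof (intro notI)
      assume a1: "\<beta> x0 = (5/4) *\<^sub>R p - (3/4) *\<^sub>R t" and a2: "\<beta> x0 = x0"
      have "lor (\<beta> x0) t = - 3/4" unfolding a1 using pt tt by (simp add: lor_simps)
      moreover have "lor x0 t = 3/4" unfolding x0_def using pt tt by (simp add: lor_simps)
      ultimately show False using a2 by simp
    qed
    moreover have "\<beta> p = p" unfolding \<beta>_def using pt pm by (simp add: refl_fix)
    moreover have "\<beta> t = - t" unfolding \<beta>_def using tm refl_self[OF t0] by (simp add: refl_fix)
    moreover have "\<beta> q = q" unfolding \<beta>_def using refl_fix[OF mq] refl_fix[OF qt] by simp
    moreover have "\<beta> s = - s"
    proof -
      define c where "c = lor s t"
      have sm': "s = m + c *\<^sub>R t" using sm c_def by simp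
      have "refl m s = - m + c *\<^sub>R t" unfolding sm'
        by (simp add: refl_add refl_scale refl_self[OF m0] refl_fix tm)
      hence "refl t (refl m s) = - m - c *\<^sub>R t"
        by (simp add: refl_diff refl_add refl_minus refl_scale refl_self[OF t0] refl_fix mt)
      thus ?thesis unfolding \<beta>_def using sm' by (simp add: algebra_simps)
    qed
    moreover have "isometry \<beta>" unfolding \<beta>_def using isometry_comp isometry_refl tt mm by simp
    moreover have "linear \<beta>" unfolding \<beta>_def using linear_M by simp
    moreover have "\<forall>x y. lor (\<beta> x) (\<beta> y) = lor x y" unfolding \<beta>_def using refl_lor t0 m0 by simp
    moreover have "\<forall>x. \<beta> (\<beta> x) = x" unfolding \<beta>_def
      using refl_refl[OF t0] refl_refl[OF m0] refl_commute[of m t] mt by (simp add: lor_sym[of m t])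
    ultimately show ?thesis using x0H by blast
  qed
qed



theorem theorem7p1:
  fixes A B :: "pt \<Rightarrow> pt" and LA LB :: "pt set"
  assumes "pure_hyperbolic A" and "pure_hyperbolic B"
    and "axis_of A LA" and "axis_of B LB"
    and "ultra_parallel LA LB"
  shows "(\<exists>P. plane P \<and> orthogonal_to P LA \<and> orthogonal_to P LB) \<and> linked A B"
proof -
  obtain uA vA a a' where hA: "lor uA uA > 0" "lor vA vA > 0" "\<forall>x\<in>H4. A x = refl uA (refl vA x)"
     "nullpair a a'" "LA = H4 \<inter> span {a, a'}" "uA \<in> span {a, a'}" "vA \<in> span {a, a'}"
     "\<forall>z\<in>span {a, a'}. refl uA (refl vA z) = z \<longrightarrow> z = 0"
    using pure_axis[OF assms(1,3)] by blast
  obtain uB vB b b' where hB: "lor uB uB > 0" "lor vB vB > 0" "\<forall>x\<in>H4. B x = refl uB (refl vB x)"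
     "nullpair b b'" "LB = H4 \<inter> span {b, b'}" "uB \<in> span {b, b'}" "vB \<in> span {b, b'}"
     "\<forall>z\<in>span {b, b'}. refl uB (refl vB z) = z \<longrightarrow> z = 0"
    using pure_axis[OF assms(2,4)] by blast
  obtain e where e: "e > 0" "\<And>x y. x \<in> LA \<Longrightarrow> y \<in> LB \<Longrightarrow> hdist x y \<ge> e"
    using assms(5) unfolding ultra_parallel_def by blast
  have d1: "\<And>x y. x \<in> H4 \<Longrightarrow> x \<in> span {a, a'} \<Longrightarrow> y \<in> H4 \<Longrightarrow> y \<in> span {b, b'} \<Longrightarrow> hdist x y \<ge> e"
    using e(2) hA(5) hB(5) by blast
  have d2: "\<And>x y. x \<in> H4 \<Longrightarrow> x \<in> span {a', a} \<Longrightarrow> y \<in> H4 \<Longrightarrow> y \<in> span {b, b'} \<Longrightarrow> hdist x y \<ge> e"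
    using d1 by (simp add: insert_commute)
  have d3: "\<And>x y. x \<in> H4 \<Longrightarrow> x \<in> span {a, a'} \<Longrightarrow> y \<in> H4 \<Longrightarrow> y \<in> span {b', b} \<Longrightarrow> hdist x y \<ge> e"
    using d1 by (simp add: insert_commute)
  have d4: "\<And>x y. x \<in> H4 \<Longrightarrow> x \<in> span {a', a} \<Longrightarrow> y \<in> H4 \<Longrightarrow> y \<in> span {b', b} \<Longrightarrow> hdist x y \<ge> e"
    using d1 by (simp add: insert_commute)
  have na: "nullpair a a'" "nullpair a' a" using hA(4) nullpair_sym by auto
  have nb: "nullpair b b'" "nullpair b' b" using hB(4) nullpair_sym by auto
  have le: "lor x y \<le> 0" if "nullpair x x'" "nullpair y y'" for x x' y y'
    using causal_future_lor_le[of x y] that unfolding nullpair_def by auto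
  have c1: "lor a b < 0" using up_nonzero[OF na(1) nb(1) e(1) d1] le[OF na(1) nb(1)] by linarith
  have c2: "lor a b' < 0" using up_nonzero[OF na(1) nb(2) e(1) d3] le[OF na(1) nb(2)] by linarith
  have c3: "lor a' b < 0" using up_nonzero[OF na(2) nb(1) e(1) d2] le[OF na(2) nb(1)] by linarith
  have c4: "lor a' b' < 0" using up_nonzero[OF na(2) nb(2) e(1) d4] le[OF na(2) nb(2)] by linarith
  obtain X Y where XY: "X > 0" "Y > 0" "lor (tng X a a') (ptt Y b b') = 0" "lor (ptt X a a') (tng Y b b') = 0"
    using common_perp[OF na(1) nb(1) c1 c2 c3 c4] by blast
  define p where "p = ptt X a a'"
  define t where "t = tng X a a'"
  define q where "q = ptt Y b b'"
  define s where "s = tng Y b b'"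
  have tq: "lor t q = 0" and ps: "lor p s = 0" using XY unfolding p_def t_def q_def s_def by auto
  have pH: "p \<in> H4" "p \<in> span {a, a'}" "t \<in> span {a, a'}"
    unfolding p_def t_def using ptt_H4[OF na(1) XY(1)] ptt_span by auto
  have qH: "q \<in> H4" "q \<in> span {b, b'}" "s \<in> span {b, b'}"
    unfolding q_def s_def using ptt_H4[OF nb(1) XY(2)] ptt_span by auto
  have pLA: "p \<in> LA" using pH hA(5) by simp
  have qLB: "q \<in> LB" using qH hB(5) by simp
  have pl: "lor p p = -1" "lor t t = 1" "lor p t = 0"
    using ptt_lor[OF na(1) XY(1)] unfolding p_def t_def by auto
  have ql: "lor q q = -1" "lor s s = 1" "lor q s = 0"
    using ptt_lor[OF nb(1) XY(2)] unfolding q_def s_def by auto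
  obtain n where n: "n \<noteq> 0" "lor n a = 0" "lor n a' = 0" "lor n b = 0" "lor n b' = 0"
    using perp_exists4[of a a' b b'] by blast
  have nA: "lor n w = 0" if "w \<in> span {a, a'}" for w
    using lor_span_zero[of "{a, a'}" n w] n that by auto
  have nB: "lor n w = 0" if "w \<in> span {b, b'}" for w
    using lor_span_zero[of "{b, b'}" n w] n that by auto
  have np: "lor n p = 0" "lor n t = 0" "lor n q = 0" "lor n s = 0"
    using nA[OF pH(2)] nA[OF pH(3)] nB[OF qH(2)] nB[OF qH(3)] by auto
  have pq1: "lor p q \<le> -1" using H4_lor_le[OF pH(1) qH(1)] .
  have pq2: "lor p q \<noteq> -1"
  proof
    assume "lor p q = -1"
    hence "hdist p q = 0" by (simp add: hdist_def)
    thus False using e pLA qLB by fastforce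
  qed
  define U where "U = span {p, q, n}"
  define P where "P = H4 \<inter> U"
  have nn: "lor n n > 0" using timelike_perp[of p n] pl np n(1) by (simp add: lor_sym[of p n])
  have indep: "independent {p, q, n}"
  proof (rule independent_insertI)
    show "independent {q, n}"
    proof (rule independent_insertI)
      show "independent {n}" using n(1) by simp
      show "q \<notin> span {n}"
      proof
        assume "q \<in> span {n}"
        hence "lor q q = 0" using lor_span_zero[of "{n}" q q] np by (simp add: lor_sym[of q n])
        thus False using ql by simp
      qed
    qed
    show "p \<notin> span {q, n}"
    proof
      assume "p \<in> span {q, n}"
      then obtain \<alpha> \<beta> where pe: "p = \<alpha> *\<^sub>R q + \<beta> *\<^sub>R n" using span2_decomp by blast
      have "lor p n = \<beta> * lor n n" unfolding pe using np by (simp add: lor_simps lor_sym[of q n])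
      hence "\<beta> = 0" using np nn by (simp add: lor_sym[of p n])
      hence pe': "p = \<alpha> *\<^sub>R q" using pe by simp
      have "lor p q = - \<alpha>" unfolding pe' using ql by (simp add: lor_simps)
      moreover have "lor p p = - \<alpha> * \<alpha>" unfolding pe' using ql by (simp add: lor_simps)
      ultimately have "\<alpha> * \<alpha> = 1" "lor p q = - \<alpha>" using pl by auto
      hence "\<alpha> = 1 \<or> \<alpha> = -1" by (metis mult_cancel_left1 square_eq_1_iff)
      thus False using pq1 pq2 \<open>lor p q = - \<alpha>\<close> by auto
    qed
  qed
  have dist: "p \<noteq> q" "p \<noteq> n" "q \<noteq> n" using pl ql np pq2 by auto
  have "dim U = card {p, q, n}" unfolding U_def by (rule dim_span_eq_card_independent[OF indep])
  also have "\<dots> = 2 + 1" using dist by simp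
  finally have dimU: "dim U = 2 + 1" .
  have planeP: "plane P" unfolding plane_def tg_subspace_def P_def
    using dimU pH(1) by (intro exI[of _ U]) (auto simp: U_def span_base)
  have spanP: "span P \<subseteq> U" unfolding P_def U_def by (simp add: span_minimal)
  have t3: "lor t p = 0" "lor t q = 0" "lor t n = 0" using pl tq np by (simp_all add: lor_sym[of t p] lor_sym[of t n])
  have s3: "lor s p = 0" "lor s q = 0" "lor s n = 0" using ql ps np by (simp_all add: lor_sym[of s p] lor_sym[of s q] lor_sym[of s n])
  have tU: "lor t w = 0" if "w \<in> U" for w
    using lor_span_zero[of "{p, q, n}" t w] that t3 unfolding U_def by blast
  have sU: "lor s w = 0" if "w \<in> U" for w
    using lor_span_zero[of "{p, q, n}" s w] that s3 unfolding U_def by blast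
  have spanLA: "span LA \<subseteq> span {a, a'}" using hA(5) by (simp add: span_minimal)
  have spanLB: "span LB \<subseteq> span {b, b'}" using hB(5) by (simp add: span_minimal)
  have oA: "orthogonal_to P LA" unfolding orthogonal_to_def
  proof (intro bexI[of _ p] ballI impI)
    fix v w assume v: "v \<in> span LA" and w: "w \<in> span P" and vp: "lor v p = 0"
    obtain c where "v = c *\<^sub>R t" using perp_in_span[OF na(1) XY(1), of v] v vp spanLA unfolding p_def t_def by auto
    thus "lor v w = 0" using tU spanP w by (auto simp: lor_simps)
  next
    show "p \<in> P \<inter> LA" using pLA pH unfolding P_def U_def by (auto intro: span_base)
  qed
  have oB: "orthogonal_to P LB" unfolding orthogonal_to_def
  proof (intro bexI[of _ q] ballI impI)
    fix v w assume v: "v \<in> span LB" and w: "w \<in> span P" and vq: "lor v q = 0"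
    obtain c where "v = c *\<^sub>R s" using perp_in_span[OF nb(1) XY(2), of v] v vq spanLB unfolding q_def s_def by auto
    thus "lor v w = 0" using sU spanP w by (auto simp: lor_simps)
  next
    show "q \<in> P \<inter> LB" using qLB qH unfolding P_def U_def by (auto intro: span_base)
  qed
  obtain \<beta> where \<beta>: "linear \<beta>" "\<forall>x y. lor (\<beta> x) (\<beta> y) = lor x y" "\<forall>x. \<beta> (\<beta> x) = x" "isometry \<beta>"
    "\<exists>x\<in>H4. \<beta> x \<noteq> x" "\<beta> p = p" "\<beta> t = - t" "\<beta> q = q" "\<beta> s = - s"
    using beta_exists[OF pH(1) qH(1) pl(2,3) ql(2,3) tq ps] by blast
  have uAS: "uA \<in> span {p, t}" "vA \<in> span {p, t}"
    using span_pt[OF XY(1), of a a'] hA(6,7) unfolding p_def t_def by auto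
  have uBS: "uB \<in> span {q, s}" "vB \<in> span {q, s}"
    using span_pt[OF XY(2), of b b'] hB(6,7) unfolding q_def s_def by auto
  define \<alpha> where "\<alpha> = (\<lambda>x. refl uA (refl vA (\<beta> x)))"
  define \<gamma> where "\<gamma> = (\<lambda>x. \<beta> (refl uB (refl vB x)))"
  have invb: "involution \<beta>" unfolding involution_def using \<beta> by auto
  have inva: "involution \<alpha>" unfolding involution_def
  proof (intro conjI)
    show "isometry \<alpha>" unfolding \<alpha>_def
      using isometry_comp[OF isometry_refl[OF hA(1)] isometry_comp[OF isometry_refl[OF hA(2)] \<beta>(4)]] .
    show "\<forall>x\<in>H4. \<alpha> (\<alpha> x) = x" unfolding \<alpha>_def
      using link_core(1)[OF pl uAS(1) hA(1) uAS(2) hA(2) \<beta>(1)] \<beta>(2,3,6,7) by auto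
    have "\<alpha> p \<noteq> p"
    proof
      assume "\<alpha> p = p"
      hence "refl uA (refl vA p) = p" unfolding \<alpha>_def using \<beta>(6) by simp
      hence "p = 0" using hA(8) pH(2) by blast
      thus False using pl by simp
    qed
    thus "\<exists>x\<in>H4. \<alpha> x \<noteq> x" using pH(1) by blast
  qed
  have invc: "involution \<gamma>" unfolding involution_def
  proof (intro conjI)
    show "isometry \<gamma>" unfolding \<gamma>_def
      using isometry_comp[OF \<beta>(4) isometry_comp[OF isometry_refl[OF hB(1)] isometry_refl[OF hB(2)]]] .
    show "\<forall>x\<in>H4. \<gamma> (\<gamma> x) = x" unfolding \<gamma>_def
      using link_core(2)[OF ql uBS(1) hB(1) uBS(2) hB(2) \<beta>(1)] \<beta>(2,3,8,9) by auto
    have "\<gamma> q \<noteq> q"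
    proof
      assume "\<gamma> q = q"
      hence "\<beta> (\<beta> (refl uB (refl vB q))) = \<beta> q" unfolding \<gamma>_def by simp
      hence "refl uB (refl vB q) = q" using \<beta>(3,8) by simp
      hence "q = 0" using hB(8) qH(2) by blast
      thus False using ql by simp
    qed
    thus "\<exists>x\<in>H4. \<gamma> x \<noteq> x" using qH(1) by blast
  qed
  have A': "\<forall>x\<in>H4. A x = \<alpha> (\<beta> x)" unfolding \<alpha>_def using hA(3) \<beta>(3) by simp
  have B': "\<forall>x\<in>H4. B x = \<beta> (\<gamma> x)" unfolding \<gamma>_def using hB(3) \<beta>(3) by simp
  have "linked A B" unfolding linked_def using inva invb invc A' B' by blast
  thus ?thesis using planeP oA oB by blast
qed


end
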